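(* Assume $X_0\in L^\infty$, $\beta\in\mathbb{R}$, $\lambda>0$. Let $w\in\mathscr{W}^{\mathrm{icx}}$. If $w(1)>w(1-)$, then $\inf_{Q\in\mathscr{Q}}L(Q,w;\beta,\lambda)=-\infty$.
   Context: $(\Omega,\mathcal{F},\mathbb{P})$ is a complete nonatomic probability space. $\rho\in L^2$ with $\mathbb{P}(\rho>0)=1$ and $\mathrm{Var}[\rho]>0$. For a random variable $X$, $Q_X(t)=\inf\{y:\mathbb{P}(X\le y)>t\}$ for $t\in[0,1)$, $Q_X(1):=\lim_{t\uparrow1}Q_X(t)$; $Q_0:=Q_{X_0}$. $\mathscr{Q}$ is the set of increasing, right-continuous $Q:[0,1)\to\mathbb{R}$ with $\int_0^1Q^2<\infty$ (extended by $Q(1)=Q(1-)$). $\mathscr{W}^{\mathrm{icx}}$ is the set of increasing convex $w:[0,1]\to[0,\infty)$ with $w(0)=0$; each $w$ is identified with the finite Borel measure on $[0,1]$ with distribution function $w$ (with $w(0-):=0$), so $\{1\}$ has mass $w(1)-w(1-)$. Define $$L(Q,w;\beta,\lambda)=\int_0^1(Q(s)-\beta)^2ds+\lambda\int_0^1Q(s)Q_\rho(1-s)ds-\Big(\int_{[0,1]}Q(s)dw(s)-\int_{[0,1]}Q_0(s)dw(s)\Big).$$ *)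

theory Defs
  imports "HOL-Probability.Probability"
begin

definition nonatomic :: "'a measure \<Rightarrow> bool" where
  "nonatomic M \<longleftrightarrow> (\<forall>A\<in>sets M. measure M A > 0 \<longrightarrow>
      (\<exists>B\<in>sets M. B \<subseteq> A \<and> 0 < measure M B \<and> measure M B < measure M A))"

definition qext :: "(real \<Rightarrow> real) \<Rightarrow> real \<Rightarrow> real" where
  "qext Q s = (if s < 1 then Q s else Lim (at_left 1) Q)"

definition quantile :: "'a measure \<Rightarrow> ('a \<Rightarrow> real) \<Rightarrow> real \<Rightarrow> real" where
  "quantile M X = qext (\<lambda>t. Inf {y. measure M {x \<in> space M. X x \<le> y} > t})"

definition Qset :: "(real \<Rightarrow> real) set" where
  "Qset = {Q. mono_on {0..<1} Q \<and> (\<forall>t\<in>{0..<1}. continuous (at_right t) Q)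
              \<and> set_integrable lborel {0..<1} (\<lambda>s. (Q s)\<^sup>2)}"

definition Wicx :: "(real \<Rightarrow> real) set" where
  "Wicx = {w. mono_on {0..1} w \<and> convex_on {0..1} w \<and> w 0 = 0 \<and> (\<forall>s\<in>{0..1}. w s \<ge> 0)}"

(* the finite Borel measure on [0,1] with distribution function w (w(0-) := 0) *)
definition wmeas :: "(real \<Rightarrow> real) \<Rightarrow> real measure" where
  "wmeas w = interval_measure (\<lambda>x. if x < 0 then 0 else if x \<le> 1 then w x else w 1)"

definition Lfun :: "'a measure \<Rightarrow> ('a \<Rightarrow> real) \<Rightarrow> ('a \<Rightarrow> real)
     \<Rightarrow> (real \<Rightarrow> real) \<Rightarrow> (real \<Rightarrow> real) \<Rightarrow> real \<Rightarrow> real \<Rightarrow> real" where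
  "Lfun M X0 \<rho> Q w \<beta> lam =
     (LINT s:{0..<1}|lborel. (Q s - \<beta>)\<^sup>2)
     + lam * (LINT s:{0..<1}|lborel. Q s * quantile M \<rho> (1 - s))
     - ((LINT s:{0..1}|wmeas w. qext Q s) - (LINT s:{0..1}|wmeas w. quantile M X0 s))"

end

theory Submission imports Defs begin
lemma qg_facts:
  fixes M :: "'a measure" and \<rho> :: "'a \<Rightarrow> real"
  assumes "prob_space M" "\<rho> \<in> borel_measurable M" "AE x in M. \<rho> x > 0"
  defines "g \<equiv> (\<lambda>t. Inf {y. measure M {x \<in> space M. \<rho> x \<le> y} > t})"
  shows "\<exists>K. \<forall>t t'. 0 \<le> t \<longrightarrow> t \<le> t' \<longrightarrow> t' \<le> 1/2 \<longrightarrow> 0 \<le> g t' \<and> g t \<le> g t' \<and> g t' \<le> K"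
proof -
  interpret prob_space M by fact
  define P where "P y = measure M {x \<in> space M. \<rho> x \<le> y}" for y
  have meas: "{x \<in> space M. \<rho> x \<le> y} \<in> sets M" for y
    using assms(2) by measurable
  have "(\<lambda>i. P (real i)) \<longlonglongrightarrow> measure M (\<Union>i. {x \<in> space M. \<rho> x \<le> real i})"
    unfolding P_def
    by (rule finite_Lim_measure_incseq) (auto simp: incseq_def meas intro: order_trans)
  moreover have "(\<Union>i. {x \<in> space M. \<rho> x \<le> real i}) = space M"
    using real_arch_simple by blast
  ultimately have "(\<lambda>i. P (real i)) \<longlonglongrightarrow> 1" by (simp add: prob_space)
  then have "eventually (\<lambda>i. P (real i) > 1/2) sequentially"
    by (rule order_tendstoD) simp
  then obtain i where y0: "P (real i) > 1/2" by (metis eventually_sequentially order_refl)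
  have P0: "P y = 0" if "y \<le> 0" for y
  proof -
    have "emeasure M {x \<in> space M. \<not> \<rho> x > 0} = 0"
      using AE_iff_measurable[of "{x \<in> space M. \<not> \<rho> x > 0}" M "\<lambda>x. \<rho> x > 0"] assms(2,3)
      by (auto simp: not_less)
    moreover have "{x \<in> space M. \<rho> x \<le> y} \<subseteq> {x \<in> space M. \<not> \<rho> x > 0}" using that by auto
    moreover have "{x \<in> space M. \<not> \<rho> x > 0} \<in> sets M" using assms(2) by measurable
    ultimately have "emeasure M {x \<in> space M. \<rho> x \<le> y} \<le> 0"
      by (metis emeasure_mono)
    then have "emeasure M {x \<in> space M. \<rho> x \<le> y} = 0" by simp
    then show ?thesis unfolding P_def by (simp add: measure_def)
  qed
  define T where "T t = {y. P y > t}" for t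
  have gT: "g t = Inf (T t)" for t unfolding g_def T_def P_def by simp
  have Tne: "real i \<in> T t" if "t \<le> 1/2" for t using that y0 unfolding T_def by auto
  have Tpos: "y > 0" if "y \<in> T t" "0 \<le> t" for y t
    using that P0 unfolding T_def by (metis leI less_le_not_le mem_Collect_eq)
  have bdd: "0 \<le> t \<Longrightarrow> bdd_below (T t)" for t
    using Tpos by (meson bdd_below.I less_imp_le)
  show ?thesis
  proof (intro exI allI impI conjI)
    fix t t' :: real assume h: "0 \<le> t" "t \<le> t'" "t' \<le> 1/2"
    show "0 \<le> g t'" unfolding gT
      by (rule cInf_greatest) (use Tne h Tpos in \<open>auto intro: less_imp_le\<close>)
    show "g t \<le> g t'" unfolding gT
      by (rule cInf_superset_mono) (use Tne h bdd in \<open>auto simp: T_def\<close>)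
    show "g t' \<le> real i" unfolding gT
      by (rule cInf_lower) (use Tne h bdd in auto)
  qed
qed

lemma w_facts:
  assumes "w \<in> Wicx"
  defines "F \<equiv> (\<lambda>x. if x < 0 then 0 else if x \<le> 1 then w x else w 1)"
  shows "\<And>x y. x \<le> y \<Longrightarrow> F x \<le> F y"
    and "\<And>a. continuous (at_right a) F"
    and "\<And>e. 0 < e \<Longrightarrow> e \<le> 1 \<Longrightarrow> w (1 - e) \<le> Lim (at_left 1) w"
proof -
  have mono: "mono_on {0..1} w" and cvx: "convex_on {0..1} w" and w0: "w 0 = 0"
    and wpos: "\<And>s. s \<in> {0..1} \<Longrightarrow> w s \<ge> 0"
    using assms(1) unfolding Wicx_def by auto
  have wle: "w x \<le> w y" if "0 \<le> x" "x \<le> y" "y \<le> 1" for x y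
    using mono that by (auto intro: mono_onD)
  show F: "F x \<le> F y" if "x \<le> y" for x y
    using that wle wpos unfolding F_def by auto
  show "continuous (at_right a) F" for a
  proof -
    consider "a < 0" | "a = 0" | "0 < a" "a < 1" | "1 \<le> a" by linarith
    then show ?thesis
    proof cases
      case 1
      have "eventually (\<lambda>x. F x = F a) (at_right a)"
        using eventually_at_right_real[OF 1] by eventually_elim (use 1 in \<open>auto simp: F_def\<close>)
      then show ?thesis unfolding continuous_within
        by (rule tendsto_eventually)
    next
      case 4
      have "eventually (\<lambda>x. F x = F a) (at_right a)"
        using eventually_at_right_less[of a] by eventually_elim (use 4 in \<open>auto simp: F_def\<close>)
      then show ?thesis unfolding continuous_within
        by (rule tendsto_eventually)
    next
      case 3
      have "continuous_on {0<..<1} w"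
        by (rule convex_on_continuous) (auto intro: convex_on_subset[OF cvx])
      then have "isCont w a" using 3 by (simp add: continuous_on_eq_continuous_at)
      then have "(w \<longlongrightarrow> w a) (at_right a)"
        by (simp add: isCont_def filterlim_at_split)
      moreover have "eventually (\<lambda>x. w x = F x) (at_right a)"
        using eventually_at_right_real[OF 3(2)] by eventually_elim (use 3 in \<open>auto simp: F_def\<close>)
      ultimately have "(F \<longlongrightarrow> w a) (at_right a)" by (rule Lim_transform_eventually)
      then show ?thesis using 3 unfolding continuous_within by (simp add: F_def)
    next
      case 2
      have ev01: "eventually (\<lambda>x. x \<in> {0<..<1::real}) (at_right 0)"
        by (rule eventually_at_right_real) simp
      have up: "w x \<le> x * w 1" if "0 \<le> x" "x \<le> 1" for x
        using convex_onD[OF cvx, of x 0 1] that w0 by auto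
      have "((\<lambda>x. x * w 1) \<longlongrightarrow> 0 * w 1) (at_right 0)"
        by (intro tendsto_intros)
      then have lim: "((\<lambda>x. x * w 1) \<longlongrightarrow> 0) (at_right 0)" by simp
      have "(F \<longlongrightarrow> 0) (at_right 0)"
      proof (rule tendsto_sandwich[OF _ _ tendsto_const lim])
        show "eventually (\<lambda>x. 0 \<le> F x) (at_right 0)"
          using ev01 by eventually_elim (auto simp: F_def intro: wpos)
        show "eventually (\<lambda>x. F x \<le> x * w 1) (at_right 0)"
          using ev01 by eventually_elim (auto simp: F_def intro: up)
      qed
      then show ?thesis using 2 w0 unfolding continuous_within by (simp add: F_def)
    qed
  qed
  define w' where "w' x = w (max 0 x)" for x
  have "(w' \<longlongrightarrow> Sup (w' ` ({..<1} \<inter> UNIV))) (at 1 within ({..<1} \<inter> UNIV))"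
    by (rule Lim_left_bound[where K="w 1"]) (auto simp: w'_def intro!: wle)
  then have l1: "(w' \<longlongrightarrow> Sup (w' ` {..<1})) (at_left 1)" by simp
  have evl: "eventually (\<lambda>x. x \<in> {0<..<1::real}) (at_left 1)"
    by (rule eventually_at_left_real) simp
  have "eventually (\<lambda>x. w' x = w x) (at_left 1)"
    using evl by eventually_elim (auto simp: w'_def)
  with l1 have "(w \<longlongrightarrow> Sup (w' ` {..<1})) (at_left 1)" by (rule Lim_transform_eventually)
  then have LimEq: "Lim (at_left 1) w = Sup (w' ` {..<1})"
    by (intro tendsto_Lim) (simp_all add: trivial_limit_at_left_real)
  show "w (1 - e) \<le> Lim (at_left 1) w" if "0 < e" "e \<le> 1" for e
  proof -
    have m: "w' (1 - e) \<in> w' ` {..<1}" using that by (intro imageI) simp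
    have "bdd_above (w' ` {..<1})"
      by (rule bdd_aboveI[where M="w 1"]) (auto simp: w'_def intro!: wle)
    then have "w' (1 - e) \<le> Sup (w' ` {..<1})"
      using m by (rule cSup_upper[rotated])
    then show ?thesis using that by (simp add: LimEq w'_def)
  qed
qed

lemma main_part:
  fixes M :: "'a measure" and X0 \<rho> :: "'a \<Rightarrow> real"
    and \<beta> lam :: real and w :: "real \<Rightarrow> real"
  assumes K: "\<forall>t t'. 0 \<le> t \<longrightarrow> t \<le> t' \<longrightarrow> t' \<le> 1/2 \<longrightarrow> 0 \<le> g t' \<and> g t \<le> g t' \<and> g t' \<le> K"
    and gdef: "quantile M \<rho> = qext g"
    and "lam > 0"
    and "w \<in> Wicx"
    and "w 1 > Lim (at_left 1) w"
  shows "\<forall>B::real. \<exists>Q\<in>Qset.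
           set_integrable lborel {0..<1} (\<lambda>s. Q s * quantile M \<rho> (1 - s))
         \<and> set_integrable (wmeas w) {0..1} (qext Q)
         \<and> Lfun M X0 \<rho> Q w \<beta> lam < B"
proof
  fix B :: real
  define S where "S = Lim (at_left 1) w"
  define J where "J = w 1 - S"
  have J: "J > 0" using assms(5) unfolding J_def S_def by simp
  define D where "D = (LINT s:{0..1}|wmeas w. quantile M X0 s)"
  have K0: "0 \<le> K" using K by (meson order_trans order_refl zero_le_divide_iff zero_le_numeral zero_le_one) 
  define cst where "cst = \<beta>\<^sup>2 + 1 + 2 * \<bar>\<beta>\<bar> + lam * K + D"
  define c where "c = max 2 ((cst - B) / J + 1)"
  have c2: "c \<ge> 2" unfolding c_def by simp
  have cJ: "c * J > cst - B"
  proof -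
    have "c \<ge> (cst - B) / J + 1" unfolding c_def by simp
    then have "c * J \<ge> ((cst - B) / J + 1) * J" using J by (intro mult_right_mono) auto
    also have "((cst - B) / J + 1) * J = cst - B + J" using J by (simp add: field_simps)
    finally show ?thesis using J by simp
  qed
  define e where "e = 1 / c\<^sup>2"
  have e0: "0 < e" using c2 unfolding e_def by simp
  have e4: "e \<le> 1/4"
  proof -
    have "c\<^sup>2 \<ge> 2\<^sup>2" using c2 by (intro power_mono) auto
    then have "1 / c\<^sup>2 \<le> 1 / 4" by (intro divide_left_mono) auto
    then show ?thesis unfolding e_def by simp
  qed
  have ce: "c * e = 1 / c" using c2 unfolding e_def by (simp add: power2_eq_square field_simps)
  define Q where "Q s = (if 1 - e \<le> s then c else 0)" for s
  have Qsq: "indicator {0..<1} s *\<^sub>R (Q s)\<^sup>2 = c\<^sup>2 * indicator {1-e..<1} s" for s :: real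
    using e4 e0 by (auto simp: Q_def indicator_def)
  have QQ: "Q \<in> Qset"
    unfolding Qset_def
  proof (intro CollectI conjI ballI)
    show "mono_on {0..<1} Q" using c2 by (auto simp: Q_def intro!: mono_onI)
    fix t :: real
    show "continuous (at_right t) Q"
    proof (cases "1 - e \<le> t")
      case True
      have "eventually (\<lambda>x. Q x = Q t) (at_right t)"
        using eventually_at_right_less[of t] by eventually_elim (use True in \<open>auto simp: Q_def\<close>)
      then show ?thesis unfolding continuous_within by (rule tendsto_eventually)
    next
      case False
      have "eventually (\<lambda>x. x \<in> {t<..<1-e}) (at_right t)"
        by (rule eventually_at_right_real) (use False in simp)
      then have "eventually (\<lambda>x. Q x = Q t) (at_right t)"
        by eventually_elim (use False in \<open>auto simp: Q_def\<close>)
      then show ?thesis unfolding continuous_within by (rule tendsto_eventually)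
    qed
  next
    show "set_integrable lborel {0..<1} (\<lambda>s. (Q s)\<^sup>2)"
      unfolding set_integrable_def Qsq using e0 by (intro integrable_mult_right integrable_real_indicator) auto
  qed
  have A_eq: "indicator {0..<1} s *\<^sub>R (Q s - \<beta>)\<^sup>2 =
      \<beta>\<^sup>2 * indicator {0..<1} s + ((c - \<beta>)\<^sup>2 - \<beta>\<^sup>2) * indicator {1-e..<1} s" for s :: real
    using e4 e0 by (auto simp: Q_def indicator_def)
  have A_val: "(LINT s:{0..<1}|lborel. (Q s - \<beta>)\<^sup>2) = \<beta>\<^sup>2 + ((c - \<beta>)\<^sup>2 - \<beta>\<^sup>2) * e"
  proof -
    have i1: "integrable lborel (\<lambda>x. \<beta>\<^sup>2 * indicator {0..<1::real} x :: real)"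
      by (intro integrable_mult_right integrable_real_indicator) auto
    have i2: "integrable lborel (\<lambda>x. ((c - \<beta>)\<^sup>2 - \<beta>\<^sup>2) * indicator {1-e..<1::real} x :: real)"
      using e0 by (intro integrable_mult_right integrable_real_indicator) auto
    show ?thesis
      unfolding set_lebesgue_integral_def A_eq
      by (subst Bochner_Integration.integral_add[OF i1 i2]) (use e0 in simp)
  qed
  have A_le: "(LINT s:{0..<1}|lborel. (Q s - \<beta>)\<^sup>2) \<le> \<beta>\<^sup>2 + 1 + 2 * \<bar>\<beta>\<bar>"
  proof -
    have "((c - \<beta>)\<^sup>2 - \<beta>\<^sup>2) * e = 1 - 2 * \<beta> / c"
      using c2 unfolding e_def by (simp add: power2_eq_square field_simps)
    moreover have "- 2 * \<beta> / c \<le> 2 * \<bar>\<beta>\<bar>"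
    proof -
      have "\<bar>2 * \<beta> / c\<bar> = 2 * \<bar>\<beta>\<bar> / c" using c2 by simp
      also have "\<dots> \<le> 2 * \<bar>\<beta>\<bar>" using c2 mult_right_mono[of 1 c "\<bar>\<beta>\<bar>"] by (simp add: field_simps)
      finally show ?thesis by linarith
    qed
    ultimately show ?thesis unfolding A_val by linarith
  qed
  define g' where "g' t = g (max 0 (min t (1/2)))" for t
  have g'mono: "mono g'" unfolding g'_def
    by (rule monoI) (use K in \<open>auto simp: max_def min_def\<close>)
  have g'b: "0 \<le> g' t \<and> g' t \<le> K" for t unfolding g'_def
    using K by (auto simp: max_def min_def)
  have g'meas: "(\<lambda>s. g' (1 - s)) \<in> borel_measurable lborel"
    using borel_measurable_mono[OF g'mono] by measurable
  have B_eq: "indicator {0..<1} s *\<^sub>R (Q s * quantile M \<rho> (1 - s)) =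
      c * indicator {1-e..<1} s * g' (1 - s)" for s :: real
    using e4 e0 by (auto simp: Q_def indicator_def gdef qext_def g'_def)
  have B_int: "integrable lborel (\<lambda>s. c * indicator {1-e..<1} s * g' (1 - s))"
  proof (rule integrableI_bounded_set[where A="{1-e..<1}" and B="c * K"])
    show "(\<lambda>s. c * indicator {1 - e..<1} s * g' (1 - s)) \<in> borel_measurable lborel"
      using g'meas by measurable
    show "AE x in lborel. x \<in> {1 - e..<1} \<longrightarrow> norm (c * indicator {1 - e..<1} x * g' (1 - x)) \<le> c * K"
      using c2 g'b by (auto intro!: mult_left_mono simp: abs_of_nonneg)
  qed (use e0 in auto)
  have B_le: "(LINT s:{0..<1}|lborel. Q s * quantile M \<rho> (1 - s)) \<le> K"
  proof -
    have "(LINT s:{0..<1}|lborel. Q s * quantile M \<rho> (1 - s))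
        = integral\<^sup>L lborel (\<lambda>s. c * indicator {1-e..<1} s * g' (1 - s))"
      unfolding set_lebesgue_integral_def B_eq ..
    also have "\<dots> \<le> integral\<^sup>L lborel (\<lambda>s. c * K * indicator {1-e..<1} s)"
    proof (rule integral_mono[OF B_int])
      show "integrable lborel (\<lambda>s. c * K * indicator {1-e..<1::real} s :: real)"
        using e0 by (intro integrable_mult_right integrable_real_indicator) auto
      show "c * indicator {1-e..<1} s * g' (1 - s) \<le> c * K * indicator {1-e..<1} s" for s :: real
        using c2 g'b[of "1-s"] by (auto simp: indicator_def)
    qed
    also have "\<dots> = c * K * e" using e0 by simp
    also have "\<dots> = K / c" using ce by (simp add: field_simps)
    also have "\<dots> \<le> K" using c2 K0 mult_right_mono[of 1 c K] by (simp add: divide_le_eq mult.commute)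
    finally show ?thesis .
  qed
  have B_si: "set_integrable lborel {0..<1} (\<lambda>s. Q s * quantile M \<rho> (1 - s))"
    unfolding set_integrable_def B_eq by (rule B_int)
  define F where "F = (\<lambda>x. if x < 0 then 0 else if x \<le> 1 then w x else (w 1::real))"
  have wm: "wmeas w = interval_measure F" unfolding wmeas_def F_def ..
  have wf1: "F x \<le> F y" if "x \<le> y" for x y
    using w_facts(1)[OF assms(4) that] unfolding F_def .
  have wf2: "continuous (at_right a) F" for a
    using w_facts(2)[OF assms(4)] unfolding F_def .
  note wf = wf1 wf2 w_facts(3)[OF assms(4)]
  have Ioc: "emeasure (wmeas w) {a<..b} = F b - F a" if "a \<le> b" for a b
    unfolding wm using that wf(1,2) by (intro emeasure_interval_measure_Ioc) auto
  have fin: "emeasure (wmeas w) {1-e..1} < \<infinity>"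
  proof -
    have "emeasure (wmeas w) {1-e..1} \<le> emeasure (wmeas w) {-1<..1}"
      using e4 by (intro emeasure_mono) (auto simp: wm)
    also have "\<dots> < \<infinity>" by (simp add: Ioc)
    finally show ?thesis .
  qed
  have limQ: "Lim (at_left 1) Q = c"
  proof (rule tendsto_Lim)
    show "at_left (1::real) \<noteq> bot" by simp
    have "eventually (\<lambda>x. x \<in> {1-e<..<1}) (at_left (1::real))"
      by (rule eventually_at_left_real) (use e0 in simp)
    then have "eventually (\<lambda>x. Q x = c) (at_left 1)"
      by eventually_elim (auto simp: Q_def)
    then show "(Q \<longlongrightarrow> c) (at_left 1)" by (rule tendsto_eventually)
  qed
  have C_eq: "indicator {0..1} s *\<^sub>R qext Q s = c * indicator {1-e..1} s" for s :: real
    using e4 e0 by (auto simp: Q_def indicator_def qext_def limQ)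
  have C_si: "set_integrable (wmeas w) {0..1} (qext Q)"
    unfolding set_integrable_def C_eq
    using fin by (intro integrable_mult_right integrable_real_indicator) (auto simp: wm)
  have C_ge: "(LINT s:{0..1}|wmeas w. qext Q s) \<ge> c * J"
  proof -
    have "(LINT s:{0..1}|wmeas w. qext Q s) = c * measure (wmeas w) {1-e..1}"
      unfolding set_lebesgue_integral_def C_eq using fin by (simp add: wm)
    moreover have "measure (wmeas w) {1-e<..1} \<le> measure (wmeas w) {1-e..1}"
      using fin by (intro measure_mono_fmeasurable) (auto simp: wm fmeasurableI)
    moreover have "measure (wmeas w) {1-e<..1} = w 1 - w (1 - e)"
    proof -
      have "emeasure (wmeas w) {1-e<..1} = F 1 - F (1 - e)" using e0 by (intro Ioc) simp
      moreover have "F 1 - F (1 - e) = w 1 - w (1 - e)" using e4 e0 by (simp add: F_def)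
      moreover have "w (1 - e) \<le> w 1" using wf(1)[of "1-e" 1] e4 e0 by (simp add: F_def)
      ultimately show ?thesis by (simp add: measure_def)
    qed
    moreover have "w (1 - e) \<le> S" unfolding S_def using e0 e4 by (intro wf(3)) auto
    ultimately have "measure (wmeas w) {1-e..1} \<ge> J" unfolding J_def by linarith
    then have "c * measure (wmeas w) {1-e..1} \<ge> c * J" using c2 by (intro mult_left_mono) auto
    then show ?thesis using \<open>(LINT s:{0..1}|wmeas w. qext Q s) = _\<close> by simp
  qed
  have "Lfun M X0 \<rho> Q w \<beta> lam \<le> (\<beta>\<^sup>2 + 1 + 2 * \<bar>\<beta>\<bar>) + lam * K - c * J + D"
  proof -
    have "lam * (LINT s:{0..<1}|lborel. Q s * quantile M \<rho> (1 - s)) \<le> lam * K"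
      using B_le assms(3) by (intro mult_left_mono) auto
    then show ?thesis unfolding Lfun_def D_def using A_le C_ge by linarith
  qed
  also have "\<dots> < B" using cJ unfolding cst_def by linarith
  finally show "\<exists>Q\<in>Qset.
           set_integrable lborel {0..<1} (\<lambda>s. Q s * quantile M \<rho> (1 - s))
         \<and> set_integrable (wmeas w) {0..1} (qext Q)
         \<and> Lfun M X0 \<rho> Q w \<beta> lam < B"
    using QQ B_si C_si by blast
qed

theorem lemma5p1:
  fixes M :: "'a measure" and X0 \<rho> :: "'a \<Rightarrow> real"
    and \<beta> lam :: real and w :: "real \<Rightarrow> real"
  assumes "prob_space M" and "complete_measure M" and "nonatomic M"
    and "\<rho> \<in> borel_measurable M" and "integrable M (\<lambda>x. (\<rho> x)\<^sup>2)"
    and "AE x in M. \<rho> x > 0" and "prob_space.variance M \<rho> > 0"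
    and "X0 \<in> borel_measurable M" and "\<exists>C. AE x in M. \<bar>X0 x\<bar> \<le> C"
    and "lam > 0"
    and "w \<in> Wicx"
    and "w 1 > Lim (at_left 1) w"
  shows "\<forall>B::real. \<exists>Q\<in>Qset.
           set_integrable lborel {0..<1} (\<lambda>s. Q s * quantile M \<rho> (1 - s))
         \<and> set_integrable (wmeas w) {0..1} (qext Q)
         \<and> Lfun M X0 \<rho> Q w \<beta> lam < B"
proof -
  obtain K where K: "\<forall>t t'. 0 \<le> t \<longrightarrow> t \<le> t' \<longrightarrow> t' \<le> 1/2 \<longrightarrow>
      0 \<le> (\<lambda>t. Inf {y. measure M {x \<in> space M. \<rho> x \<le> y} > t}) t'
    \<and> (\<lambda>t. Inf {y. measure M {x \<in> space M. \<rho> x \<le> y} > t}) t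
      \<le> (\<lambda>t. Inf {y. measure M {x \<in> space M. \<rho> x \<le> y} > t}) t'
    \<and> (\<lambda>t. Inf {y. measure M {x \<in> space M. \<rho> x \<le> y} > t}) t' \<le> K"
    using qg_facts[OF assms(1,4,6)] by blast
  show ?thesis
    by (rule main_part[OF K _ assms(10,11,12)]) (simp add: quantile_def)
qed

end
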